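(* Let $(X,d)$ be a complete metric space and let $\{T_i\}_{i\in\mathbb{N}}$ be a sequence of maps $T_i:X\to X$ having a compact invariant set $C\subseteq X$ (i.e., $T_i(C)\subseteq C$ for all $i$), where each $T_i$ is Lipschitz with Lipschitz constant $s_i$. If $\sum_{k=1}^\infty\prod_{i=1}^k s_i<\infty$, then for every $x\in C$ the backward trajectory $\Psi_k(x)$, where $\Psi_k=T_1\circ T_2\circ\cdots\circ T_k$, converges as $k\to\infty$, and the limit is a point of $C$ which is the same for all starting points $x\in C$. *)

theory Defs
  imports "HOL-Analysis.Analysis"
begin

fun Psi :: "(nat \<Rightarrow> 'a \<Rightarrow> 'a) \<Rightarrow> nat \<Rightarrow> 'a \<Rightarrow> 'a" where
  "Psi T 0 = id"
| "Psi T (Suc k) = Psi T k \<circ> T (Suc k)"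

end

theory Submission
  imports Defs
begin

lemma dist_sum_cauchy:
  fixes f :: "nat \<Rightarrow> 'a::metric_space"
  assumes d: "\<And>k. dist (f k) (f (Suc k)) \<le> a k" and sa: "summable a"
  shows "Cauchy f"
proof (rule metric_CauchyI)
  have le: "dist (f m) (f n) \<le> sum a {m..<n}" if "m \<le> n" for m n
    using that
  proof (induction n rule: dec_induct)
    case base then show ?case by simp
  next
    case (step n)
    have "dist (f m) (f (Suc n)) \<le> dist (f m) (f n) + dist (f n) (f (Suc n))"
      by (rule dist_triangle)
    also have "\<dots> \<le> sum a {m..<n} + a n" using step d by (meson add_mono)
    also have "\<dots> = sum a {m..<Suc n}" using step by simp
    finally show ?case .
  qed
  fix e :: real assume "e > 0"
  then obtain N where N: "\<And>m n. m \<ge> N \<Longrightarrow> norm (sum a {m..<n}) < e"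
    using sa unfolding summable_Cauchy by blast
  have "dist (f m) (f n) < e" if "m \<ge> N" "n \<ge> N" for m n
  proof (cases "m \<le> n")
    case True
    have "dist (f m) (f n) \<le> sum a {m..<n}" using le True by blast
    also have "\<dots> \<le> norm (sum a {m..<n})" by simp
    finally show ?thesis using N[OF that(1), of n] by linarith
  next
    case False
    have "dist (f m) (f n) = dist (f n) (f m)" by (simp add: dist_commute)
    also have "\<dots> \<le> sum a {n..<m}" using le False by simp
    also have "\<dots> \<le> norm (sum a {n..<m})" by simp
    finally show ?thesis using N[OF that(2), of m] by linarith
  qed
  then show "\<exists>M. \<forall>m\<ge>M. \<forall>n\<ge>M. dist (f m) (f n) < e" by blast
qed

theorem mainTheorem4:
  fixes T :: "nat \<Rightarrow> 'a::complete_space \<Rightarrow> 'a" and s :: "nat \<Rightarrow> real" and C :: "'a set"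
  assumes "compact C"
    and "\<And>i. i \<ge> 1 \<Longrightarrow> T i ` C \<subseteq> C"
    and "\<And>i. i \<ge> 1 \<Longrightarrow> lipschitz_on (s i) UNIV (T i)"
    and "summable (\<lambda>k. \<Prod>i=1..k. s i)"
  shows "(\<forall>x\<in>C. \<exists>p\<in>C. (\<lambda>k. Psi T k x) \<longlonglongrightarrow> p)
         \<and> (\<forall>x\<in>C. \<forall>y\<in>C. lim (\<lambda>k. Psi T k x) = lim (\<lambda>k. Psi T k y))"
proof -
  define P where "P k = (\<Prod>i=1..k. s i)" for k
  have inC: "Psi T k x \<in> C" if "x \<in> C" for k x
    using that
  proof (induction k arbitrary: x)
    case 0 then show ?case by simp
  next
    case (Suc k)
    have "T (Suc k) x \<in> C" using assms(2)[of "Suc k"] Suc.prems by auto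
    then show ?case using Suc.IH by simp
  qed
  have lip: "dist (Psi T k x) (Psi T k y) \<le> P k * dist x y" for k x y
  proof (induction k arbitrary: x y)
    case 0 then show ?case by (simp add: P_def)
  next
    case (Suc k)
    have L: "lipschitz_on (s (Suc k)) UNIV (T (Suc k))" using assms(3) by simp
    have P0: "P k \<ge> 0" unfolding P_def
      by (rule prod_nonneg) (use assms(3) lipschitz_on_nonneg in auto)
    have "dist (Psi T (Suc k) x) (Psi T (Suc k) y) \<le> P k * dist (T (Suc k) x) (T (Suc k) y)"
      using Suc.IH by simp
    also have "\<dots> \<le> P k * (s (Suc k) * dist x y)"
      using lipschitz_onD[OF L] P0 by (simp add: mult_left_mono)
    also have "\<dots> = P (Suc k) * dist x y" by (simp add: P_def prod.nat_ivl_Suc')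
    finally show ?case .
  qed
  have bC: "bounded C" using assms(1) compact_imp_bounded by blast
  then obtain D where D: "\<And>x y. x \<in> C \<Longrightarrow> y \<in> C \<Longrightarrow> dist x y \<le> D"
    unfolding bounded_two_points by blast
  have P0: "P k \<ge> 0" for k unfolding P_def
    by (rule prod_nonneg) (use assms(3) lipschitz_on_nonneg in auto)
  have sP: "summable P" using assms(4) by (simp add: P_def[abs_def])
  have close: "dist (Psi T k x) (Psi T k y) \<le> P k * D" if "x \<in> C" "y \<in> C" for k x y
    using lip[of k x y] D[OF that] P0[of k] by (meson mult_left_mono order_trans)
  have conv: "\<exists>p\<in>C. (\<lambda>k. Psi T k x) \<longlonglongrightarrow> p" if x: "x \<in> C" for x
  proof -
    have "Cauchy (\<lambda>k. Psi T k x)"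
    proof (rule dist_sum_cauchy[where a = "\<lambda>k. P k * D"])
      fix k
      have Tx: "T (Suc k) x \<in> C" using assms(2)[of "Suc k"] x by auto
      have "dist (Psi T k x) (Psi T (Suc k) x) = dist (Psi T k x) (Psi T k (T (Suc k) x))"
        by simp
      also have "\<dots> \<le> P k * D" using close[OF x Tx] .
      finally show "dist (Psi T k x) (Psi T (Suc k) x) \<le> P k * D" .
    next
      show "summable (\<lambda>k. P k * D)" using sP by (rule summable_mult2)
    qed
    then obtain p where p: "(\<lambda>k. Psi T k x) \<longlonglongrightarrow> p"
      using convergent_eq_Cauchy convergent_def by blast
    have "p \<in> C"
      by (rule closed_sequentially[OF compact_imp_closed[OF assms(1)], of "\<lambda>k. Psi T k x"])
         (use p inC[OF x] in auto)
    then show ?thesis using p by blast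
  qed
  have same: "lim (\<lambda>k. Psi T k x) = lim (\<lambda>k. Psi T k y)" if x: "x \<in> C" and y: "y \<in> C" for x y
  proof -
    obtain p where p: "(\<lambda>k. Psi T k x) \<longlonglongrightarrow> p" using conv[OF x] by blast
    obtain q where q: "(\<lambda>k. Psi T k y) \<longlonglongrightarrow> q" using conv[OF y] by blast
    have P0l: "(\<lambda>k. P k * D) \<longlonglongrightarrow> 0"
      using summable_LIMSEQ_zero[OF summable_mult2[OF sP, of D]] .
    have "(\<lambda>k. dist (Psi T k x) (Psi T k y)) \<longlonglongrightarrow> 0"
    proof (rule Lim_null_comparison[OF _ P0l])
      show "\<forall>\<^sub>F k in sequentially. norm (dist (Psi T k x) (Psi T k y)) \<le> P k * D"
        using close[OF x y] by simp
    qed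
    moreover have "(\<lambda>k. dist (Psi T k x) (Psi T k y)) \<longlonglongrightarrow> dist p q"
      using tendsto_dist[OF p q] .
    ultimately have "dist p q = 0" using LIMSEQ_unique by blast
    then show ?thesis using p q limI by auto
  qed
  show ?thesis using conv same by blast
qed

end
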